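(* Let $m\ge3$ be odd and $n\ge2$. The $m$th order $n$-dimensional Hilbert tensor $\mathcal{A}=(a_{i_1\dots i_m})$, $a_{i_1\dots i_m}=\frac{1}{i_1+\cdots+i_m+1}$ for $i_1,\dots,i_m\in\{0,\dots,n-1\}$, is a strict Hankel tensor, and hence a strongly SOS tensor.
   Context: Index tensors by $\{0,\dots,n-1\}$. A Hankel tensor of order $k$ and dimension $n$ is a tensor with $a_{i_1\dots i_k}=h_{i_1+\cdots+i_k}$ for a generating vector $\mathbf{h}=(h_0,\dots,h_{(n-1)k})$. When $k$ is even, its associated Hankel matrix is the $((n-1)k/2+1)\times((n-1)k/2+1)$ matrix $(h_{p+q})_{p,q=0}^{(n-1)k/2}$, and the even order Hankel tensor is a strong Hankel tensor if this matrix is positive semi-definite. For an odd order $m$ symmetric Hankel tensor $\mathcal{A}$ and $i\in\{0,\dots,n-1\}$, let $\mathcal{A}_i=(a_{ii_2\dots i_m})$ be the $(m-1)$th order Hankel tensor obtained by fixing the first index at $i$ (generating vector $(h_{i+k})_{k=0}^{(n-1)(m-1)}$). $\mathcal{A}$ is a strict Hankel tensor if $\mathcal{A}_i$ is a strong Hankel tensor for every $i=0,\dots,n-1$. For odd $m$ and symmetric $\mathcal{A}$, with $F_i(\mathbf{x})=\sum_{i_2,\dots,i_m}a_{ii_2\dots i_m}x_{i_2}\cdots x_{i_m}$, $\mathcal{A}$ is a strongly SOS tensor if each $F_i$ is a sum of squares of real polynomials. *)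

theory Defs
  imports Complex_Main "HOL-Library.Multiset"
begin

text \<open>Tensors of order m and dimension n are functions on index lists of length m
  with entries in {0,...,n-1}; entries outside are irrelevant.\<close>

definition tensor_indices :: "nat \<Rightarrow> nat \<Rightarrow> nat list set" where
  "tensor_indices k n = {is. length is = k \<and> set is \<subseteq> {..<n}}"

definition symmetric_tensor :: "nat \<Rightarrow> nat \<Rightarrow> (nat list \<Rightarrow> real) \<Rightarrow> bool" where
  "symmetric_tensor k n A \<longleftrightarrow>
     (\<forall>is\<in>tensor_indices k n. \<forall>js\<in>tensor_indices k n. mset is = mset js \<longrightarrow> A is = A js)"

definition hankel_tensor_gen :: "nat \<Rightarrow> nat \<Rightarrow> (nat list \<Rightarrow> real) \<Rightarrow> (nat \<Rightarrow> real) \<Rightarrow> bool" where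
  "hankel_tensor_gen k n A h \<longleftrightarrow> (\<forall>is\<in>tensor_indices k n. A is = h (sum_list is))"

definition strong_hankel_gen :: "nat \<Rightarrow> nat \<Rightarrow> (nat \<Rightarrow> real) \<Rightarrow> bool" where
  "strong_hankel_gen k n h \<longleftrightarrow>
     (\<forall>y :: nat \<Rightarrow> real.
        (\<Sum>p\<le>(n - 1) * k div 2. \<Sum>q\<le>(n - 1) * k div 2. y p * h (p + q) * y q) \<ge> 0)"

text \<open>Strict Hankel tensor (odd order m, symmetric Hankel tensor): every slice
  A_i, with generating vector (h(i+k))_k, is a strong Hankel tensor.\<close>
definition strict_hankel_tensor :: "nat \<Rightarrow> nat \<Rightarrow> (nat list \<Rightarrow> real) \<Rightarrow> bool" where
  "strict_hankel_tensor m n A \<longleftrightarrow> odd m \<and> symmetric_tensor m n A \<and>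
     (\<exists>h. hankel_tensor_gen m n A h \<and>
          (\<forall>i<n. strong_hankel_gen (m - 1) n (\<lambda>k. h (i + k))))"

definition real_poly_fun :: "nat \<Rightarrow> ((nat \<Rightarrow> real) \<Rightarrow> real) \<Rightarrow> bool" where
  "real_poly_fun n f \<longleftrightarrow>
     (\<exists>(C :: (nat \<Rightarrow> nat) set) (c :: (nat \<Rightarrow> nat) \<Rightarrow> real). finite C \<and>
        (\<forall>x. f x = (\<Sum>\<alpha>\<in>C. c \<alpha> * (\<Prod>j<n. x j ^ \<alpha> j))))"

definition is_sos :: "nat \<Rightarrow> ((nat \<Rightarrow> real) \<Rightarrow> real) \<Rightarrow> bool" where
  "is_sos n F \<longleftrightarrow> (\<exists>qs. (\<forall>q\<in>set qs. real_poly_fun n q) \<and>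
                        (\<forall>x. F x = (\<Sum>q\<leftarrow>qs. (q x)\<^sup>2)))"

definition tensor_F :: "nat \<Rightarrow> nat \<Rightarrow> (nat list \<Rightarrow> real) \<Rightarrow> nat \<Rightarrow> (nat \<Rightarrow> real) \<Rightarrow> real" where
  "tensor_F m n A i x = (\<Sum>is\<in>tensor_indices (m - 1) n. A (i # is) * prod_list (map x is))"

definition strongly_sos_tensor :: "nat \<Rightarrow> nat \<Rightarrow> (nat list \<Rightarrow> real) \<Rightarrow> bool" where
  "strongly_sos_tensor m n A \<longleftrightarrow> odd m \<and> symmetric_tensor m n A \<and>
     (\<forall>i<n. is_sos n (tensor_F m n A i))"

definition hilbert_tensor :: "nat list \<Rightarrow> real" where
  "hilbert_tensor is = 1 / (real (sum_list is) + 1)"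

end

theory Submission
  imports Defs "HOL-Analysis.Analysis"
begin


lemma pow_int: "((\<lambda>t::real. t^k) has_integral (1/(real k + 1))) {0..1}"
proof -
  have "((\<lambda>t::real. t^k) has_integral ((\<lambda>t. t^Suc k / real (Suc k)) 1 - (\<lambda>t. t^Suc k / real(Suc k)) 0)) {0..1}"
    apply (rule fundamental_theorem_of_calculus)
     apply simp
  proof -
    fix x :: real
    assume "x \<in> {0..1}"
    have "DERIV (\<lambda>x. x^Suc k / Suc k) x :> x^k"
      by (intro derivative_eq_intros) auto
    then show "((\<lambda>t. t ^ Suc k / real (Suc k)) has_vector_derivative x ^ k) (at x within {0..1})"
      by (simp add: has_real_derivative_iff_has_vector_derivative[symmetric] has_field_derivative_at_within)
  qed
  then show ?thesis by (simp add: add.commute)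
qed

lemma hilbert_psd:
  fixes y :: "nat \<Rightarrow> real" and i N :: nat
  shows "0 \<le> (\<Sum>p\<le>N. \<Sum>q\<le>N. y p * (1 / (real (i + (p + q)) + 1)) * y q)"
proof -
  have "((\<lambda>t. \<Sum>p\<le>N. \<Sum>q\<le>N. y p * t^(i+(p+q)) * y q) has_integral
     (\<Sum>p\<le>N. \<Sum>q\<le>N. y p * (1/(real(i+(p+q))+1)) * y q)) {0..1}"
    by (intro has_integral_sum has_integral_mult_left has_integral_mult_right pow_int) auto
  moreover have "0 \<le> (\<Sum>p\<le>N. \<Sum>q\<le>N. y p * t^(i+(p+q)) * y q)" if "t \<in> {0..1}" for t :: real
  proof -
    have "(\<Sum>p\<le>N. \<Sum>q\<le>N. y p * t^(i+(p+q)) * y q) = t^i * (\<Sum>p\<le>N. y p * t^p)^2"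
      by (simp add: power2_eq_square sum_distrib_left sum_distrib_right power_add mult_ac)
    then show ?thesis using that by simp
  qed
  ultimately show ?thesis by (rule has_integral_nonneg)
qed


definition qf :: "nat set \<Rightarrow> (nat \<Rightarrow> nat \<Rightarrow> real) \<Rightarrow> (nat \<Rightarrow> real) \<Rightarrow> real" where
  "qf S H y = (\<Sum>p\<in>S. \<Sum>q\<in>S. y p * H p q * y q)"

lemma qf_insert:
  assumes "finite S" "a \<notin> S" "\<forall>p\<in>insert a S. \<forall>q\<in>insert a S. H p q = H q p"
  shows "qf (insert a S) H y = y a ^ 2 * H a a + 2 * y a * (\<Sum>q\<in>S. H a q * y q) + qf S H y"
proof -
  have inner: "(\<Sum>q\<in>insert a S. y p * H p q * y q) = y p * H p a * y a + (\<Sum>q\<in>S. y p * H p q * y q)" for p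
    using assms(1,2) by (rule sum.insert)
  have e1: "qf (insert a S) H y = (\<Sum>p\<in>insert a S. y p * H p a * y a + (\<Sum>q\<in>S. y p * H p q * y q))"
    unfolding qf_def inner ..
  have e2: "(\<Sum>p\<in>insert a S. y p * H p a * y a + (\<Sum>q\<in>S. y p * H p q * y q)) =
     (y a * H a a * y a + (\<Sum>p\<in>S. y p * H p a * y a)) + ((\<Sum>q\<in>S. y a * H a q * y q) + qf S H y)"
    unfolding sum.insert[OF assms(1,2)] sum.distrib qf_def by (rule refl)
  have e3: "(\<Sum>q\<in>S. y a * H a q * y q) = y a * (\<Sum>q\<in>S. H a q * y q)"
    unfolding sum_distrib_left by (simp only: mult.assoc)
  have e4: "(\<Sum>p\<in>S. y p * H p a * y a) = y a * (\<Sum>q\<in>S. H a q * y q)"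
    unfolding sum_distrib_left
  proof (intro sum.cong refl)
    fix p assume "p \<in> S"
    then have "H p a = H a p" using assms(3) by blast
    then show "y p * H p a * y a = y a * (H a p * y p)" by (simp add: mult_ac)
  qed
  show ?thesis unfolding e1 e2 e3 e4 by (simp add: power2_eq_square)
qed

lemma lin_ext:
  fixes l y :: "nat \<Rightarrow> real"
  assumes "finite S" "a \<notin> S"
  shows "(\<Sum>p\<in>insert a S. (l(a:=0)) p * y p) = (\<Sum>p\<in>S. l p * y p)"
proof -
  have "(\<Sum>p\<in>insert a S. (l(a:=0)) p * y p) = (\<Sum>p\<in>S. (l(a:=0)) p * y p)"
    by (simp only: sum.insert[OF assms] fun_upd_same mult_zero_left add_0_left)
  also have "\<dots> = (\<Sum>p\<in>S. l p * y p)" using assms(2) by (intro sum.cong) auto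
  finally show ?thesis .
qed

lemma ext_map:
  fixes ls :: "(nat \<Rightarrow> real) list" and y :: "nat \<Rightarrow> real"
  assumes "finite S" "a \<notin> S"
  shows "(\<Sum>l\<leftarrow>map (\<lambda>l. l(a:=0)) ls. (\<Sum>p\<in>insert a S. l p * y p)^2)
      = (\<Sum>l\<leftarrow>ls. (\<Sum>p\<in>S. l p * y p)^2)"
  by (induction ls) (simp_all del: fun_upd_apply sum.insert add: lin_ext[OF assms])

lemma psd_sos:
  fixes H :: "nat \<Rightarrow> nat \<Rightarrow> real"
  assumes "finite S" "\<forall>p\<in>S. \<forall>q\<in>S. H p q = H q p" "\<forall>y. 0 \<le> qf S H y"
  shows "\<exists>ls. \<forall>y. qf S H y = (\<Sum>l\<leftarrow>ls. (\<Sum>p\<in>S. l p * y p)^2)"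
  using assms
proof (induction S arbitrary: H rule: finite_induct)
  case empty
  then show ?case by (intro exI[of _ "[]"]) (simp add: qf_def)
next
  case (insert a S)
  note exp = qf_insert[OF insert(1,2,4)]
  define d where "d = H a a"
  define b where "b q = H a q" for q
  have symS: "\<forall>p\<in>S. \<forall>q\<in>S. H p q = H q p" using insert(4) by auto
  have extm: "\<And>(ls::(nat \<Rightarrow> real) list) (y::nat \<Rightarrow> real). (\<Sum>l\<leftarrow>map (\<lambda>l. l(a:=0)) ls. (\<Sum>p\<in>insert a S. l p * y p)^2)
      = (\<Sum>l\<leftarrow>ls. (\<Sum>p\<in>S. l p * y p)^2)"
    by (rule ext_map[OF insert(1,2)])
  have "d \<ge> 0"
  proof -
    have "0 \<le> qf (insert a S) H (\<lambda>p. if p = a then 1 else 0)" using insert(5) by blast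
    also have "\<dots> = d"
    proof -
      have z1: "(\<Sum>q\<in>S. H a q * (if q = a then 1 else 0)) = 0" using insert(2) by (intro sum.neutral) auto
      have z2: "(\<Sum>p\<in>S. \<Sum>q\<in>S. (if p = a then 1 else 0) * H p q * (if q = a then (1::real) else 0)) = 0"
        using insert(2) by (intro sum.neutral) auto
      show ?thesis using exp insert(2) z1 z2 by (simp add: d_def qf_def)
    qed
    finally show ?thesis .
  qed
  show ?case
  proof (cases "d = 0")
    case True
    have "(\<Sum>q\<in>S. b q ^ 2) = 0"
    proof (rule ccontr)
      assume ne: "(\<Sum>q\<in>S. b q ^ 2) \<noteq> 0"
      have pos: "(\<Sum>q\<in>S. b q ^ 2) > 0" using ne by (simp add: order_less_le sum_nonneg)
      define t where "t = - (\<bar>qf S H b\<bar> + 1) / (2 * (\<Sum>q\<in>S. b q ^ 2))"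
      have "0 \<le> qf (insert a S) H (b(a:=t))" using insert(5) by blast
      also have "\<dots> = 2 * t * (\<Sum>q\<in>S. b q ^ 2) + qf S H b"
      proof -
        have "qf S H (b(a:=t)) = qf S H b" using insert(2) unfolding qf_def
          by (auto intro!: sum.cong)
        moreover have "(\<Sum>q\<in>S. H a q * (b(a:=t)) q) = (\<Sum>q\<in>S. b q ^ 2)"
          using insert(2) by (auto simp: b_def power2_eq_square intro!: sum.cong)
        ultimately show ?thesis using exp True by (simp add: d_def)
      qed
      also have "\<dots> = - (\<bar>qf S H b\<bar> + 1) + qf S H b" using pos by (simp add: t_def)
      also have "\<dots> < 0" by linarith
      finally show False by simp
    qed
    then have b0: "\<forall>q\<in>S. b q = 0"
      using sum_nonneg_eq_0_iff[OF insert(1), of "\<lambda>q. b q ^ 2"] by simp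
    have eq: "qf (insert a S) H y = qf S H y" for y
      using exp b0 True by (simp add: d_def b_def)
    have "\<forall>y. 0 \<le> qf S H y" using insert(5) eq by metis
    then obtain ls where ls: "\<forall>y. qf S H y = (\<Sum>l\<leftarrow>ls. (\<Sum>p\<in>S. l p * y p)^2)"
      using insert(3)[OF symS] by blast
    show ?thesis
    proof (rule exI[of _ "map (\<lambda>l. l(a:=0)) ls"], intro allI)
      fix y
      have "qf (insert a S) H y = qf S H y" by (rule eq)
      also have "\<dots> = (\<Sum>l\<leftarrow>ls. (\<Sum>p\<in>S. l p * y p)^2)" using ls by blast
      also have "\<dots> = (\<Sum>l\<leftarrow>map (\<lambda>l. l(a:=0)) ls. (\<Sum>p\<in>insert a S. l p * y p)^2)"
        by (rule extm[symmetric])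
      finally show "qf (insert a S) H y = (\<Sum>l\<leftarrow>map (\<lambda>l. l(a:=0)) ls. (\<Sum>p\<in>insert a S. l p * y p)^2)" .
    qed
  next
    case False
    then have dpos: "d > 0" using \<open>d \<ge> 0\<close> by simp
    define H' where "H' p q = H p q - b p * b q / d" for p q
    have qfH': "qf S H' y = qf S H y - (\<Sum>q\<in>S. b q * y q)^2 / d" for y
    proof -
      have "qf S H' y = qf S H y - (\<Sum>p\<in>S. \<Sum>q\<in>S. (b p * y p) * (b q * y q)) / d"
        unfolding qf_def H'_def
        by (simp add: sum_subtractf sum_divide_distrib right_diff_distrib left_diff_distrib mult_ac)
      moreover have "(\<Sum>p\<in>S. \<Sum>q\<in>S. (b p * y p) * (b q * y q)) = (\<Sum>q\<in>S. b q * y q)^2"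
        by (simp add: power2_eq_square sum_product)
      ultimately show ?thesis by simp
    qed
    have symS': "\<forall>p\<in>S. \<forall>q\<in>S. H' p q = H' q p"
    proof (intro ballI)
      fix p q assume "p \<in> S" "q \<in> S"
      then have "H p q = H q p" using symS by blast
      then show "H' p q = H' q p" unfolding H'_def by (simp add: mult.commute)
    qed
    have psd': "\<forall>y. 0 \<le> qf S H' y"
    proof
      fix y
      define s where "s = (\<Sum>q\<in>S. b q * y q)"
      define y' where "y' = y(a := - s / d)"
      have "0 \<le> qf (insert a S) H y'" using insert(5) by blast
      also have "qf (insert a S) H y' = qf S H y - s^2 / d"
      proof -
        have "qf S H y' = qf S H y" using insert(2) unfolding qf_def y'_def
          by (auto intro!: sum.cong)
        moreover have "(\<Sum>q\<in>S. H a q * y' q) = s"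
          using insert(2) by (auto simp: b_def s_def y'_def intro!: sum.cong)
        ultimately show ?thesis using exp dpos
          by (simp add: d_def y'_def power2_eq_square field_simps)
      qed
      finally show "0 \<le> qf S H' y" using qfH' s_def by simp
    qed
    obtain ls where ls: "\<forall>y. qf S H' y = (\<Sum>l\<leftarrow>ls. (\<Sum>p\<in>S. l p * y p)^2)"
      using insert(3)[OF symS' psd'] by blast
    define l0 where "l0 p = (if p = a then sqrt d else b p / sqrt d)" for p
    have l0: "(\<Sum>p\<in>insert a S. l0 p * y p)^2 = y a ^ 2 * d + 2 * y a * (\<Sum>q\<in>S. b q * y q)
        + (\<Sum>q\<in>S. b q * y q)^2 / d" for y
    proof -
      have "(\<Sum>p\<in>insert a S. l0 p * y p) = sqrt d * y a + (\<Sum>q\<in>S. b q * y q) / sqrt d"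
        using insert(1,2) by (auto simp: l0_def sum_divide_distrib intro!: sum.cong)
      moreover have "(sqrt d * y a + (\<Sum>q\<in>S. b q * y q) / sqrt d)^2 =
         (sqrt d)^2 * (y a)^2 + 2 * y a * (\<Sum>q\<in>S. b q * y q) * (sqrt d / sqrt d)
         + (\<Sum>q\<in>S. b q * y q)^2 / (sqrt d)^2"
        by (simp add: power2_sum power_divide power_mult_distrib)
      moreover have "sqrt d / sqrt d = 1" "(sqrt d)^2 = d" using dpos by auto
      ultimately show ?thesis by (simp add: mult.commute)
    qed
    show ?thesis
    proof (rule exI[of _ "l0 # map (\<lambda>l. l(a:=0)) ls"], intro allI)
      fix y
      show "qf (insert a S) H y = (\<Sum>l\<leftarrow>l0 # map (\<lambda>l. l(a:=0)) ls. (\<Sum>p\<in>insert a S. l p * y p)^2)"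
      proof -
        have "qf (insert a S) H y = y a ^ 2 * d + 2 * y a * (\<Sum>q\<in>S. b q * y q) + qf S H y"
          using exp by (simp add: b_def d_def)
        also have "\<dots> = (\<Sum>p\<in>insert a S. l0 p * y p)^2 + qf S H' y"
          using qfH' l0 by simp
        also have "\<dots> = (\<Sum>p\<in>insert a S. l0 p * y p)^2 + (\<Sum>l\<leftarrow>ls. (\<Sum>p\<in>S. l p * y p)^2)"
          using ls by simp
        also have "\<dots> = (\<Sum>p\<in>insert a S. l0 p * y p)^2 +
            (\<Sum>l\<leftarrow>map (\<lambda>l. l(a:=0)) ls. (\<Sum>p\<in>insert a S. l p * y p)^2)"
          by (subst extm) (rule refl)
        finally show ?thesis by simp
      qed
    qed
  qed
qed


lemma finite_ti: "finite (tensor_indices k n)"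
proof -
  have "tensor_indices k n = {xs. set xs \<subseteq> {..<n} \<and> length xs = k}"
    by (auto simp: tensor_indices_def)
  then show ?thesis using finite_lists_length_eq[of "{..<n}" k] by simp
qed

lemma sum_le: "set is \<subseteq> {..<n} \<Longrightarrow> sum_list is \<le> length is * (n - 1)"
  by (induction "is") auto

lemma split_ti:
  "tensor_indices (r + r) n = (\<lambda>(a,b). a @ b) ` (tensor_indices r n \<times> tensor_indices r n)"
proof
  show "tensor_indices (r + r) n \<subseteq> (\<lambda>(a,b). a @ b) ` (tensor_indices r n \<times> tensor_indices r n)"
  proof
    fix xs assume xs: "xs \<in> tensor_indices (r + r) n"
    have "xs = (\<lambda>(a,b). a @ b) (take r xs, drop r xs)" by simp
    moreover have "(take r xs, drop r xs) \<in> tensor_indices r n \<times> tensor_indices r n"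
      using xs by (auto simp: tensor_indices_def dest: in_set_takeD in_set_dropD)
    ultimately show "xs \<in> (\<lambda>(a,b). a @ b) ` (tensor_indices r n \<times> tensor_indices r n)" by blast
  qed
qed (auto simp: tensor_indices_def)

lemma inj_split: "inj_on (\<lambda>(a,b). a @ b) (tensor_indices r n \<times> tensor_indices r n)"
  by (auto simp: inj_on_def tensor_indices_def)

lemma monomial:
  fixes x :: "nat \<Rightarrow> real"
  shows "set js \<subseteq> {..<n} \<Longrightarrow> prod_list (map x js) = (\<Prod>j<n. x j ^ count (mset js) j)"
proof (induction js)
  case Nil then show ?case by simp
next
  case (Cons a js)
  have "(\<Prod>j<n. x j ^ count (mset (a # js)) j) = (\<Prod>j<n. x j ^ (if j = a then 1 else 0) * x j ^ count (mset js) j)"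
    by (intro prod.cong) (auto simp: power_add)
  also have "\<dots> = (\<Prod>j<n. x j ^ (if j = a then 1 else 0)) * (\<Prod>j<n. x j ^ count (mset js) j)"
    by (rule prod.distrib)
  also have "(\<Prod>j<n. x j ^ (if j = a then 1 else 0)) = x a"
  proof -
    have "(\<Prod>j<n. x j ^ (if j = a then 1 else 0)) = (\<Prod>j<n. if j = a then x j else 1)"
      by (intro prod.cong) auto
    also have "\<dots> = x a" using Cons.prems by (simp add: prod.delta)
    finally show ?thesis .
  qed
  finally show ?case using Cons by simp
qed

lemma poly_sum:
  assumes "finite T"
  shows "real_poly_fun n (\<lambda>x. \<Sum>a\<in>T. g a * (\<Prod>j<n. x j ^ \<beta> a j))"
  unfolding real_poly_fun_def
proof (intro exI conjI allI)
  show "finite (\<beta> ` T)" using assms by simp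
  fix x :: "nat \<Rightarrow> real"
  have "(\<Sum>\<alpha>\<in>\<beta> ` T. (\<Sum>a\<in>{a\<in>T. \<beta> a = \<alpha>}. g a) * (\<Prod>j<n. x j ^ \<alpha> j))
      = (\<Sum>\<alpha>\<in>\<beta> ` T. (\<Sum>a\<in>{a\<in>T. \<beta> a = \<alpha>}. g a * (\<Prod>j<n. x j ^ \<beta> a j)))"
    by (auto simp: sum_distrib_right intro!: sum.cong)
  also have "\<dots> = (\<Sum>a\<in>T. g a * (\<Prod>j<n. x j ^ \<beta> a j))"
    by (rule sum.group) (use assms in auto)
  finally show "(\<Sum>a\<in>T. g a * (\<Prod>j<n. x j ^ \<beta> a j)) =
      (\<Sum>\<alpha>\<in>\<beta> ` T. (\<lambda>\<alpha>. \<Sum>a\<in>{a\<in>T. \<beta> a = \<alpha>}. g a) \<alpha> * (\<Prod>j<n. x j ^ \<alpha> j))" by simp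
qed

lemma regroup_lin:
  fixes w :: "'a \<Rightarrow> real" and N :: nat
  assumes "finite T" "g ` T \<subseteq> {..N}"
  shows "(\<Sum>p\<le>N. l p * (\<Sum>a\<in>{a\<in>T. g a = p}. w a)) = (\<Sum>a\<in>T. l (g a) * w a)"
proof -
  have "(\<Sum>p\<le>N. l p * (\<Sum>a\<in>{a\<in>T. g a = p}. w a)) = (\<Sum>p\<le>N. (\<Sum>a\<in>{a\<in>T. g a = p}. l (g a) * w a))"
    by (auto simp: sum_distrib_left intro!: sum.cong)
  also have "\<dots> = (\<Sum>a\<in>T. l (g a) * w a)"
    by (rule sum.group) (use assms in auto)
  finally show ?thesis .
qed

lemma regroup_quad:
  fixes w :: "'a \<Rightarrow> real" and N :: nat
  assumes "finite T" "g ` T \<subseteq> {..N}"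
  shows "(\<Sum>a\<in>T. \<Sum>b\<in>T. w a * H (g a) (g b) * w b) = qf {..N} H (\<lambda>p. \<Sum>a\<in>{a\<in>T. g a = p}. w a)"
proof -
  have "qf {..N} H (\<lambda>p. \<Sum>a\<in>{a\<in>T. g a = p}. w a) =
     (\<Sum>p\<le>N. (\<Sum>a\<in>{a\<in>T. g a = p}. w a) * (\<Sum>q\<le>N. H p q * (\<Sum>b\<in>{b\<in>T. g b = q}. w b)))"
    unfolding qf_def
    apply (simp add: sum_distrib_left sum_distrib_right mult_ac)
    apply (rule sum.cong[OF refl], rule sum.cong[OF refl])
    apply (subst sum.swap)
    apply (simp add: mult_ac)
    done
  also have "\<dots> = (\<Sum>p\<le>N. (\<Sum>a\<in>{a\<in>T. g a = p}. w a * (\<Sum>b\<in>T. H (g a) (g b) * w b)))"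
  proof (intro sum.cong refl)
    fix p
    have "(\<Sum>q\<le>N. H p q * (\<Sum>b\<in>{b\<in>T. g b = q}. w b)) = (\<Sum>b\<in>T. H p (g b) * w b)"
      by (rule regroup_lin[OF assms])
    then show "(\<Sum>a\<in>{a\<in>T. g a = p}. w a) * (\<Sum>q\<le>N. H p q * (\<Sum>b\<in>{b\<in>T. g b = q}. w b)) =
        (\<Sum>a\<in>{a\<in>T. g a = p}. w a * (\<Sum>b\<in>T. H (g a) (g b) * w b))"
      by (simp add: sum_distrib_right)
  qed
  also have "\<dots> = (\<Sum>a\<in>T. w a * (\<Sum>b\<in>T. H (g a) (g b) * w b))"
    by (rule sum.group) (use assms in auto)
  also have "\<dots> = (\<Sum>a\<in>T. \<Sum>b\<in>T. w a * H (g a) (g b) * w b)"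
    by (simp add: sum_distrib_left mult_ac)
  finally show ?thesis by simp
qed



theorem theorem4p5:
  fixes m n :: nat
  assumes "m \<ge> 3" and "odd m" and "n \<ge> 2"
  shows "strict_hankel_tensor m n hilbert_tensor \<and> strongly_sos_tensor m n hilbert_tensor"
proof -
  define r where "r = (m - 1) div 2"
  have mr: "m - 1 = r + r" using assms(2) unfolding r_def using assms(2) by (simp add: r_def) presburger
  define N where "N = r * (n - 1)"
  have N2: "(n - 1) * (m - 1) = 2 * N" unfolding N_def mr by (simp add: algebra_simps)
  have N: "(n - 1) * (m - 1) div 2 = N" unfolding N2 by simp
  have sym: "symmetric_tensor m n hilbert_tensor"
    unfolding symmetric_tensor_def hilbert_tensor_def
  proof (intro ballI impI)
    fix xs ys :: "nat list" assume "mset xs = mset ys"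
    then have "sum_list xs = sum_list ys" by (metis sum_mset_sum_list)
    then show "1 / (real (sum_list xs) + 1) = 1 / (real (sum_list ys) + 1)" by simp
  qed
  define h where "h k = 1 / (real k + 1)" for k :: nat
  have strict: "strict_hankel_tensor m n hilbert_tensor"
    unfolding strict_hankel_tensor_def
  proof (intro conjI exI[of _ h])
    show "hankel_tensor_gen m n hilbert_tensor h"
      by (simp add: hankel_tensor_gen_def hilbert_tensor_def h_def)
    show "\<forall>i<n. strong_hankel_gen (m - 1) n (\<lambda>k. h (i + k))"
      unfolding strong_hankel_gen_def h_def using hilbert_psd by simp
  qed (use assms sym in auto)
  have sos: "is_sos n (tensor_F m n hilbert_tensor i)" if "i < n" for i
  proof -
    define T where "T = tensor_indices r n"
    have fT: "finite T" unfolding T_def by (rule finite_ti)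
    have gT: "sum_list ` T \<subseteq> {..N}"
      using sum_le unfolding T_def N_def tensor_indices_def by fastforce
    define H where "H p q = 1 / (real (i + (p + q)) + 1)" for p q
    define Q where "Q x p = (\<Sum>a\<in>{a\<in>T. sum_list a = p}. prod_list (map x a))"
      for x :: "nat \<Rightarrow> real" and p
    have F: "tensor_F m n hilbert_tensor i x = qf {..N} H (Q x)" for x
    proof -
      have "tensor_F m n hilbert_tensor i x =
          (\<Sum>is\<in>tensor_indices (r + r) n. H 0 (sum_list is) * prod_list (map x is))"
        unfolding tensor_F_def mr by (simp add: hilbert_tensor_def H_def add.commute)
      also have "\<dots> = (\<Sum>(a,b)\<in>T \<times> T. H 0 (sum_list (a @ b)) * prod_list (map x (a @ b)))"
        unfolding split_ti T_def by (subst sum.reindex[OF inj_split]) (simp add: case_prod_unfold)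
      also have "\<dots> = (\<Sum>a\<in>T. \<Sum>b\<in>T. prod_list (map x a) * H (sum_list a) (sum_list b) * prod_list (map x b))"
        unfolding sum.cartesian_product[symmetric] by (simp add: H_def mult_ac add.assoc)
      also have "\<dots> = qf {..N} H (Q x)"
        unfolding Q_def by (rule regroup_quad[OF fT gT])
      finally show ?thesis .
    qed
    have symH: "\<forall>p\<in>{..N}. \<forall>q\<in>{..N}. H p q = H q p" by (simp add: H_def add.commute)
    have psdH: "\<forall>y. 0 \<le> qf {..N} H y" unfolding qf_def H_def using hilbert_psd by simp
    obtain ls where ls: "\<forall>y. qf {..N} H y = (\<Sum>l\<leftarrow>ls. (\<Sum>p\<in>{..N}. l p * y p)^2)"
      using psd_sos[OF _ symH psdH] by blast
    define qs where "qs = map (\<lambda>l x. \<Sum>p\<in>{..N}. l p * Q x p) ls"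
    show ?thesis
      unfolding is_sos_def
    proof (intro exI[of _ qs] conjI ballI allI)
      fix q assume "q \<in> set qs"
      then obtain l where q: "q = (\<lambda>x. \<Sum>p\<in>{..N}. l p * Q x p)" unfolding qs_def by auto
      have "q x = (\<Sum>a\<in>T. l (sum_list a) * (\<Prod>j<n. x j ^ count (mset a) j))" for x
      proof -
        have "q x = (\<Sum>a\<in>T. l (sum_list a) * prod_list (map x a))"
          unfolding q Q_def by (rule regroup_lin[OF fT gT])
        also have "\<dots> = (\<Sum>a\<in>T. l (sum_list a) * (\<Prod>j<n. x j ^ count (mset a) j))"
          by (intro sum.cong refl) (simp add: monomial T_def tensor_indices_def)
        finally show ?thesis .
      qed
      then have "q = (\<lambda>x. \<Sum>a\<in>T. l (sum_list a) * (\<Prod>j<n. x j ^ count (mset a) j))" by blast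
      then show "real_poly_fun n q" using poly_sum[OF fT] by simp
    next
      fix x
      show "tensor_F m n hilbert_tensor i x = (\<Sum>q\<leftarrow>qs. (q x)\<^sup>2)"
        unfolding F qs_def using ls by (simp add: o_def)
    qed
  qed
  show ?thesis using strict sym sos assms(2) unfolding strongly_sos_tensor_def by blast
qed
end
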